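(* Let $K$ be an algebraically closed field, let $k\geq0$ be an integer, let $Q$ be the cyclic quiver with vertices $0,1,\dots,k$ and arrows $a_i:i\to i+1$ for $i<k$ and $a_k:k\to0$, and let $M_{\omega_1}$ be the $KQ$-module defined in the context. Then $\mathrm{Ext}^1_{KQ}\big(M_{\omega_1},\bigoplus_{\omega_1}KQ\big)\neq0$, where $\bigoplus_{\omega_1}KQ$ is the direct sum of $\omega_1$ copies of $KQ$.
   Context: Paths in a quiver are composable sequences of arrows written left to right, with trivial paths $e_v$; the path algebra $KQ$ has basis all paths, product = concatenation when the target of the first equals the source of the second, else $0$. Modules are right modules. $\omega_1$ is the first uncountable ordinal, $\mathrm{Lim}$ the class of nonzero limit ordinals. Fix a ladder system: for each $\alpha\in\omega_1\cap\mathrm{Lim}$ a set $C_\alpha=\{\zeta^\alpha_n:n\in\omega\}$, strictly increasingly enumerated and cofinal in $\alpha$, such that each $\zeta^\alpha_n$ equals $\delta+n+1$ for some $\delta\in\alpha\cap(\{0\}\cup\mathrm{Lim})$. For $\xi<\omega_1$ let $F^\xi=KQ$ if $\xi\notin\mathrm{Lim}$ and $F^\xi=\bigoplus_{n\in\omega}KQ$ if $\xi\in\mathrm{Lim}$; let $F=\bigoplus_{\xi<\omega_1}F^\xi$ (finite-support functions, coordinatewise operations). For $\gamma\in\omega_1\setminus\mathrm{Lim}$, $e^\gamma_0\in F$ has support $\{\gamma\}$ and value $e_0$ there; for $\alpha\in\mathrm{Lim}$ and $n\in\omega$, $e^{\alpha,n}_0\in F$ has support $\{\alpha\}$ and value at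 $\alpha$ the element of $\bigoplus_{m}KQ$ with support $\{n\}$ and value $e_0$. Let $G_\alpha$ be the $KQ$-submodule of $F$ generated by $\{e^{\zeta^\alpha_n}_0-e^{\alpha,n}_0+e^{\alpha,n+1}_0a_0a_1\cdots a_k:n\in\omega\}$, let $I=\sum_{\alpha\in\omega_1\cap\mathrm{Lim}}G_\alpha$, and let $M_{\omega_1}$ be the $KQ$-submodule of $F/I$ generated by $\{e^\gamma_0+I:\gamma\in\omega_1\setminus\mathrm{Lim}\}\cup\{e^{\alpha,n}_0+I:\alpha\in\omega_1\cap\mathrm{Lim},n\in\omega\}$. *)

theory Defs
  imports "HOL-Algebra.Ring" "HOL-Library.Countable_Set" "HOL-Library.Function_Algebras" "HOL-Computational_Algebra.Polynomial"
begin

definition alg_closed :: "'a::field itself \<Rightarrow> bool" where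
  "alg_closed _ \<longleftrightarrow> (\<forall>p::'a poly. degree p > 0 \<longrightarrow> (\<exists>x. poly p x = 0))"

record ('r, 'm) rmod =
  mcarrier :: "'m set"
  madd :: "'m \<Rightarrow> 'm \<Rightarrow> 'm"
  mzero :: 'm
  mact :: "'m \<Rightarrow> 'r \<Rightarrow> 'm"   (* right action: mact m r = m . r *)

definition right_module :: "'r ring \<Rightarrow> ('r, 'm) rmod \<Rightarrow> bool" where
  "right_module R M \<longleftrightarrow>
     mzero M \<in> mcarrier M
   \<and> (\<forall>x\<in>mcarrier M. \<forall>y\<in>mcarrier M. madd M x y \<in> mcarrier M)
   \<and> (\<forall>x\<in>mcarrier M. \<forall>y\<in>mcarrier M. \<forall>z\<in>mcarrier M. madd M (madd M x y) z = madd M x (madd M y z))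
   \<and> (\<forall>x\<in>mcarrier M. \<forall>y\<in>mcarrier M. madd M x y = madd M y x)
   \<and> (\<forall>x\<in>mcarrier M. madd M (mzero M) x = x)
   \<and> (\<forall>x\<in>mcarrier M. \<exists>y\<in>mcarrier M. madd M x y = mzero M)
   \<and> (\<forall>x\<in>mcarrier M. \<forall>r\<in>carrier R. mact M x r \<in> mcarrier M)
   \<and> (\<forall>x\<in>mcarrier M. \<forall>r\<in>carrier R. \<forall>s\<in>carrier R. mact M x (r \<oplus>\<^bsub>R\<^esub> s) = madd M (mact M x r) (mact M x s))
   \<and> (\<forall>x\<in>mcarrier M. \<forall>y\<in>mcarrier M. \<forall>r\<in>carrier R. mact M (madd M x y) r = madd M (mact M x r) (mact M y r))
   \<and> (\<forall>x\<in>mcarrier M. \<forall>r\<in>carrier R. \<forall>s\<in>carrier R. mact M x (r \<otimes>\<^bsub>R\<^esub> s) = mact M (mact M x r) s)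
   \<and> (\<forall>x\<in>mcarrier M. mact M x \<one>\<^bsub>R\<^esub> = x)"

definition rmod_hom :: "'r ring \<Rightarrow> ('r, 'm) rmod \<Rightarrow> ('r, 'n) rmod \<Rightarrow> ('m \<Rightarrow> 'n) \<Rightarrow> bool" where
  "rmod_hom R M N f \<longleftrightarrow>
     f \<in> mcarrier M \<rightarrow> mcarrier N
   \<and> (\<forall>x\<in>mcarrier M. \<forall>y\<in>mcarrier M. f (madd M x y) = madd N (f x) (f y))
   \<and> (\<forall>x\<in>mcarrier M. \<forall>r\<in>carrier R. f (mact M x r) = mact N (f x) r)"

text \<open>Ext^1_R(M,N) is nonzero (Yoneda description): there is a short exact sequence
  0 -> N -> E -> M -> 0 of right R-modules which does not split.  Every extension is
  isomorphic to one whose underlying set is (in bijection with) N x M, so the middle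
  term may be taken on the type 'n x 'm without loss of generality.\<close>

definition Ext1_nonzero :: "'r ring \<Rightarrow> ('r, 'm) rmod \<Rightarrow> ('r, 'n) rmod \<Rightarrow> bool" where
  "Ext1_nonzero R M N \<longleftrightarrow>
     (\<exists>(E :: ('r, 'n \<times> 'm) rmod) f g.
        right_module R E
      \<and> rmod_hom R N E f \<and> inj_on f (mcarrier N)
      \<and> rmod_hom R E M g \<and> g ` mcarrier E = mcarrier M
      \<and> f ` mcarrier N = {e \<in> mcarrier E. g e = mzero M}
      \<and> \<not> (\<exists>s. rmod_hom R M E s \<and> (\<forall>x\<in>mcarrier M. g (s x) = x)))"

inductive_set gen_submod :: "'r ring \<Rightarrow> ('r, 'm) rmod \<Rightarrow> 'm set \<Rightarrow> 'm set"
  for R M X where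
  gen_base: "x \<in> X \<Longrightarrow> x \<in> gen_submod R M X"
| gen_zero: "mzero M \<in> gen_submod R M X"
| gen_add: "x \<in> gen_submod R M X \<Longrightarrow> y \<in> gen_submod R M X \<Longrightarrow> madd M x y \<in> gen_submod R M X"
| gen_act: "x \<in> gen_submod R M X \<Longrightarrow> r \<in> carrier R \<Longrightarrow> mact M x r \<in> gen_submod R M X"

definition sub_rmod :: "('r, 'm) rmod \<Rightarrow> 'm set \<Rightarrow> ('r, 'm) rmod" where
  "sub_rmod M S = \<lparr>mcarrier = S, madd = madd M, mzero = mzero M, mact = mact M\<rparr>"

definition rcoset :: "('r, 'm) rmod \<Rightarrow> 'm set \<Rightarrow> 'm \<Rightarrow> 'm set" where
  "rcoset M S x = {madd M x s | s. s \<in> S}"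

definition quot_rmod :: "('r, 'm) rmod \<Rightarrow> 'm set \<Rightarrow> ('r, 'm set) rmod" where
  "quot_rmod M S =
    \<lparr>mcarrier = {rcoset M S x | x. x \<in> mcarrier M},
     madd = (\<lambda>A B. rcoset M S (madd M (SOME a. a \<in> A) (SOME b. b \<in> B))),
     mzero = rcoset M S (mzero M),
     mact = (\<lambda>A r. rcoset M S (mact M (SOME a. a \<in> A) r))\<rparr>"

definition dsum :: "'r ring \<Rightarrow> 'j set \<Rightarrow> ('r, 'j \<Rightarrow> 'r) rmod" where
  "dsum R J =
    \<lparr>mcarrier = {f. (\<forall>j. f j \<in> carrier R) \<and> (\<forall>j. j \<notin> J \<longrightarrow> f j = \<zero>\<^bsub>R\<^esub>)
                    \<and> finite {j. f j \<noteq> \<zero>\<^bsub>R\<^esub>}},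
     madd = (\<lambda>f g j. f j \<oplus>\<^bsub>R\<^esub> g j),
     mzero = (\<lambda>j. \<zero>\<^bsub>R\<^esub>),
     mact = (\<lambda>f r j. f j \<otimes>\<^bsub>R\<^esub> r)\<rparr>"

text \<open>Vertices 0..k, arrows a_i : i -> i+1 (i<k), a_k : k -> 0.  A path is determined by
  its source vertex v (v <= k) and its length l: it is the path a_v a_(v+1) ... (indices mod k+1);
  the trivial path e_v is (v,0) and its target is (v+l) mod (k+1).  Elements of KQ are finitely
  supported K-valued functions on paths; the product is concatenation (left to right).\<close>

definition kq_mult :: "nat \<Rightarrow> (nat \<times> nat \<Rightarrow> 'a::field) \<Rightarrow> (nat \<times> nat \<Rightarrow> 'a) \<Rightarrow> (nat \<times> nat \<Rightarrow> 'a)" where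
  "kq_mult k f g = (\<lambda>p. \<Sum>l\<in>{0..snd p}. f (fst p, l) * g ((fst p + l) mod Suc k, snd p - l))"

definition kq_one :: "nat \<Rightarrow> (nat \<times> nat \<Rightarrow> 'a::field)" where
  "kq_one k = (\<lambda>p. if fst p \<le> k \<and> snd p = 0 then 1 else 0)"

definition KQ :: "nat \<Rightarrow> (nat \<times> nat \<Rightarrow> 'a::field) ring" where
  "KQ k =
    \<lparr>carrier = {f. finite {p. f p \<noteq> 0} \<and> (\<forall>v l. k < v \<longrightarrow> f (v, l) = 0)},
     monoid.mult = kq_mult k,
     one = kq_one k,
     ring.zero = 0,
     add = (+)\<rparr>"

definition pth :: "nat \<Rightarrow> nat \<Rightarrow> (nat \<times> nat \<Rightarrow> 'a::field)" where
  "pth v l = (\<lambda>p. if p = (v, l) then 1 else 0)"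

section \<open>Ordinals below omega_1 (modelled by a well-ordered type of type omega_1)\<close>

definition is_omega1 :: "'o::wellorder itself \<Rightarrow> bool" where
  "is_omega1 _ \<longleftrightarrow> \<not> countable (UNIV :: 'o set) \<and> (\<forall>x::'o. countable {y. y < x})"

definition ozero :: "'o::wellorder" where
  "ozero = (LEAST x. True)"

definition osucc :: "'o::wellorder \<Rightarrow> 'o" where
  "osucc x = (LEAST y. x < y)"

definition is_lim :: "'o::wellorder \<Rightarrow> bool" where
  "is_lim x \<longleftrightarrow> (\<exists>y. y < x) \<and> (\<forall>y<x. \<exists>z. y < z \<and> z < x)"

definition ladder_system :: "('o::wellorder \<Rightarrow> nat \<Rightarrow> 'o) \<Rightarrow> bool" where
  "ladder_system C \<longleftrightarrow>
    (\<forall>\<alpha>. is_lim \<alpha> \<longrightarrow>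
        strict_mono (C \<alpha>)
      \<and> (\<forall>n. C \<alpha> n < \<alpha>)
      \<and> (\<forall>\<beta><\<alpha>. \<exists>n. \<beta> \<le> C \<alpha> n)
      \<and> (\<forall>n. \<exists>\<delta><\<alpha>. (\<delta> = ozero \<or> is_lim \<delta>) \<and> C \<alpha> n = (osucc ^^ Suc n) \<delta>))"

text \<open>F = direct sum over xi < omega_1 of F^xi, where F^xi = KQ (xi non-limit) and
  F^alpha = direct sum over n of KQ (alpha limit).  We flatten this to a direct sum of copies
  of KQ indexed by Jidx = {(xi,0) | xi non-limit} \<union> {(alpha,n) | alpha limit}.\<close>

definition Jidx :: "('o::wellorder \<times> nat) set" where
  "Jidx = {(\<xi>, n). \<not> is_lim \<xi> \<longrightarrow> n = 0}"

definition Fmod :: "nat \<Rightarrow> (nat \<times> nat \<Rightarrow> 'a::field, 'o::wellorder \<times> nat \<Rightarrow> nat \<times> nat \<Rightarrow> 'a) rmod" where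
  "Fmod k = dsum (KQ k) Jidx"

definition unitv :: "'j \<Rightarrow> (nat \<times> nat \<Rightarrow> 'a::field) \<Rightarrow> ('j \<Rightarrow> nat \<times> nat \<Rightarrow> 'a)" where
  "unitv j x = (\<lambda>i. if i = j then x else 0)"

text \<open>e^gamma_0 = unitv (gamma,0) e_0, e^{alpha,n}_0 = unitv (alpha,n) e_0.\<close>

definition relgen :: "nat \<Rightarrow> ('o::wellorder \<Rightarrow> nat \<Rightarrow> 'o) \<Rightarrow> 'o \<Rightarrow> nat
                        \<Rightarrow> ('o \<times> nat \<Rightarrow> nat \<times> nat \<Rightarrow> 'a::field)" where
  "relgen k C \<alpha> n =
     unitv (C \<alpha> n, 0) (pth 0 0) - unitv (\<alpha>, n) (pth 0 0)
     + mact (Fmod k) (unitv (\<alpha>, Suc n) (pth 0 0)) (pth 0 (Suc k))"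

definition Isub :: "nat \<Rightarrow> ('o::wellorder \<Rightarrow> nat \<Rightarrow> 'o) \<Rightarrow> ('o \<times> nat \<Rightarrow> nat \<times> nat \<Rightarrow> 'a::field) set" where
  "Isub k C = gen_submod (KQ k) (Fmod k) {relgen k C \<alpha> n | \<alpha> n. is_lim \<alpha>}"

definition Mgens :: "('o::wellorder \<times> nat \<Rightarrow> nat \<times> nat \<Rightarrow> 'a::field) set" where
  "Mgens = {unitv (\<gamma>, 0) (pth 0 0) | \<gamma>. \<not> is_lim \<gamma>} \<union> {unitv (\<alpha>, n) (pth 0 0) | \<alpha> n. is_lim \<alpha>}"

definition M_omega1 :: "nat \<Rightarrow> ('o::wellorder \<Rightarrow> nat \<Rightarrow> 'o)
                         \<Rightarrow> (nat \<times> nat \<Rightarrow> 'a::field, ('o \<times> nat \<Rightarrow> nat \<times> nat \<Rightarrow> 'a) set) rmod" where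
  "M_omega1 k C =
     (let Q = quot_rmod (Fmod k) (Isub k C) in
      sub_rmod Q (gen_submod (KQ k) Q {rcoset (Fmod k) (Isub k C) x | x. x \<in> Mgens}))"

end

theory Submission
  imports Defs
begin

lemma kq_mult_apply: "kq_mult k f g (v,l) = (\<Sum>i\<le>l. f (v,i) * g ((v+i) mod Suc k, l - i))"
  by (simp add: kq_mult_def atLeast0AtMost)

lemma kq_mult_assoc: "kq_mult k (kq_mult k f g) h = kq_mult k f (kq_mult k g h)"
proof (rule ext, clarify)
  fix v l
  define X where "X = (\<lambda>c d. f (v,c) * g ((v+c) mod Suc k, d) * h ((v+c+d) mod Suc k, l - c - d))"
  have L: "kq_mult k (kq_mult k f g) h (v,l) = (\<Sum>(c,d)\<in>{(c,d). c+d \<le> l}. X c d)"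
    unfolding sum.triangle_reindex_eq kq_mult_apply X_def
    by (auto simp: sum_distrib_right mod_add_left_eq intro!: sum.cong)
  have "{(c,d). c+d \<le> l} = Sigma {..l} (\<lambda>c. {..l-c})" by auto
  hence R: "kq_mult k f (kq_mult k g h) (v,l) = (\<Sum>(c,d)\<in>{(c,d). c+d \<le> l}. X c d)"
    unfolding kq_mult_apply X_def
    by (simp add: sum.Sigma sum_distrib_left mod_add_left_eq mult.assoc add.assoc diff_diff_left)
  show "kq_mult k (kq_mult k f g) h (v,l) = kq_mult k f (kq_mult k g h) (v,l)" using L R by simp
qed

lemma kq_mult_add_right: "kq_mult k f (g1 + g2) = kq_mult k f g1 + kq_mult k f g2"
  by (auto simp: kq_mult_def fun_eq_iff distrib_left sum.distrib)
lemma kq_mult_add_left: "kq_mult k (f1 + f2) g = kq_mult k f1 g + kq_mult k f2 g"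
  by (auto simp: kq_mult_def fun_eq_iff distrib_right sum.distrib)
lemma kq_mult_minus_right: "kq_mult k f (- g) = - kq_mult k f g"
  by (auto simp: kq_mult_def fun_eq_iff sum_negf)
lemma kq_mult_minus_left: "kq_mult k (- f) g = - kq_mult k f g"
  by (auto simp: kq_mult_def fun_eq_iff sum_negf)
lemma kq_mult_diff_right: "kq_mult k f (g1 - g2) = kq_mult k f g1 - kq_mult k f g2"
  by (auto simp: kq_mult_def fun_eq_iff right_diff_distrib sum_subtractf)
lemma kq_mult_diff_left: "kq_mult k (f1 - f2) g = kq_mult k f1 g - kq_mult k f2 g"
  by (auto simp: kq_mult_def fun_eq_iff left_diff_distrib sum_subtractf)
lemma kq_mult_zero_right[simp]: "kq_mult k f 0 = 0"
  by (auto simp: kq_mult_def fun_eq_iff)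
lemma kq_mult_zero_left[simp]: "kq_mult k 0 f = 0"
  by (auto simp: kq_mult_def fun_eq_iff)
lemma kq_mult_sum_left: "finite A \<Longrightarrow> kq_mult k (\<Sum>i\<in>A. f i) g = (\<Sum>i\<in>A. kq_mult k (f i) g)"
proof (induct A rule: finite_induct)
  case empty show ?case by (simp only: sum.empty kq_mult_zero_left)
next
  case (insert x F) then show ?case by (simp only: sum.insert[OF insert(1,2)] kq_mult_add_left insert(3))
qed

lemma kq_mult_one_right: "kq_mult k f (kq_one k) = f"
proof (rule ext, clarify)
  fix v l
  have "kq_mult k f (kq_one k) (v,l) = (\<Sum>i\<le>l. if i = l then f (v,i) else 0)"
    unfolding kq_mult_apply kq_one_def by (intro sum.cong) auto
  also have "\<dots> = f (v,l)" by simp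
  finally show "kq_mult k f (kq_one k) (v,l) = f (v,l)" .
qed

definition KC :: "nat \<Rightarrow> (nat \<times> nat \<Rightarrow> 'a::field) set" where
  "KC k = {f. finite {p. f p \<noteq> 0} \<and> (\<forall>v l. k < v \<longrightarrow> f (v, l) = 0)}"

lemma KQ_simps[simp]: "carrier (KQ k) = KC k" "monoid.mult (KQ k) = kq_mult k"
  "one (KQ k) = kq_one k" "zero (KQ k) = 0" "add (KQ k) = (+)"
  by (simp_all add: KQ_def KC_def)

lemma KC_add: "f \<in> KC k \<Longrightarrow> g \<in> KC k \<Longrightarrow> f + g \<in> KC k"
  unfolding KC_def by (auto intro: finite_subset[of _ "{p. f p \<noteq> 0} \<union> {p. g p \<noteq> 0}"])
lemma KC_minus: "f \<in> KC k \<Longrightarrow> - f \<in> KC k"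
  unfolding KC_def by auto
lemma KC_diff: "f \<in> KC k \<Longrightarrow> g \<in> KC k \<Longrightarrow> f - g \<in> KC k"
  using KC_add[of f k "-g"] KC_minus[of g k] by simp
lemma KC_zero[simp]: "0 \<in> KC k"
  unfolding KC_def by auto
lemma KC_sum: "finite A \<Longrightarrow> (\<And>i. i \<in> A \<Longrightarrow> f i \<in> KC k) \<Longrightarrow> (\<Sum>i\<in>A. f i) \<in> KC k"
  by (induct A rule: finite_induct) (auto intro: KC_add)

lemma KC_mult: assumes "f \<in> KC k" "g \<in> KC k" shows "kq_mult k f g \<in> KC k"
proof -
  let ?Sf = "{p. f p \<noteq> 0}" and ?Sg = "{p. g p \<noteq> 0}"
  have "{p. kq_mult k f g p \<noteq> 0} \<subseteq> (\<lambda>(a,b). (fst a, snd a + snd b)) ` (?Sf \<times> ?Sg)"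
  proof
    fix p assume "p \<in> {p. kq_mult k f g p \<noteq> 0}"
    then obtain v l where p: "p = (v,l)" and ne: "(\<Sum>i\<le>l. f (v,i) * g ((v+i) mod Suc k, l - i)) \<noteq> 0"
      by (cases p) (auto simp: kq_mult_apply)
    then obtain i where "i \<le> l" "f (v,i) * g ((v+i) mod Suc k, l - i) \<noteq> 0"
      by (meson sum.neutral atMost_iff)
    then show "p \<in> (\<lambda>(a,b). (fst a, snd a + snd b)) ` (?Sf \<times> ?Sg)"
      by (intro rev_image_eqI[of "((v,i), ((v+i) mod Suc k, l - i))"]) (auto simp: p)
  qed
  moreover have "finite ((\<lambda>(a,b). (fst a, snd a + snd b)) ` (?Sf \<times> ?Sg))"
    using assms by (auto simp: KC_def)
  ultimately have "finite {p. kq_mult k f g p \<noteq> 0}" by (rule finite_subset)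
  moreover have "\<forall>v l. k < v \<longrightarrow> kq_mult k f g (v, l) = 0"
    using assms by (auto simp: KC_def kq_mult_apply)
  ultimately show ?thesis by (simp add: KC_def)
qed

lemma kq_one_KC: "kq_one k \<in> KC k"
proof -
  have "{p. kq_one k p \<noteq> (0::'a)} = {..k} \<times> {0}" by (auto simp: kq_one_def)
  then show ?thesis by (auto simp: KC_def kq_one_def)
qed

lemma pth_KC: "v \<le> k \<Longrightarrow> pth v l \<in> KC k"
proof -
  assume "v \<le> k"
  have "{p. pth v l p \<noteq> (0::'a)} \<subseteq> {(v,l)}" by (auto simp: pth_def)
  then show ?thesis using \<open>v \<le> k\<close> by (auto simp: KC_def pth_def intro: finite_subset)
qed

definition P :: "nat \<Rightarrow> nat \<Rightarrow> (nat \<times> nat \<Rightarrow> 'a::field)" where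
  "P k i = pth 0 (i * Suc k)"

lemma P_mult: "kq_mult k (P k i) (P k m) = (P k (i+m) :: nat \<times> nat \<Rightarrow> 'a::field)"
proof (rule ext, clarify)
  fix v l
  show "kq_mult k (P k i) (P k m) (v,l) = (P k (i+m) :: nat \<times> nat \<Rightarrow> 'a::field) (v,l)"
  proof (cases "v = 0 \<and> i * Suc k \<le> l")
    case True
    have "kq_mult k (P k i) (P k m) (v,l) = (\<Sum>j\<le>l. if j = i * Suc k then (P k m ((v + j) mod Suc k, l - j) :: 'a) else 0)"
      unfolding kq_mult_apply using True by (intro sum.cong) (auto simp: P_def pth_def)
    also have "\<dots> = P k m ((v + i * Suc k) mod Suc k, l - i * Suc k)" using True by simp
    also have "\<dots> = P k (i+m) (v,l)" using True
    proof -
      have e: "(l - i*Suc k = m*Suc k) = (l = (i+m)*Suc k)" using True by (auto simp only: add_mult_distrib)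
      have z: "(v + i * Suc k) mod Suc k = 0" using True by (simp only: add_0 mod_mult_self2_is_0)
      show ?thesis unfolding P_def pth_def using True e z by simp
    qed
    finally show ?thesis .
  next
    case False
    have "kq_mult k (P k i) (P k m) (v,l) = (0::'a)" unfolding kq_mult_apply
    proof (intro sum.neutral ballI)
      fix j assume "j \<in> {..l}"
      then show "P k i (v, j) * P k m ((v + j) mod Suc k, l - j) = (0::'a)"
        using False by (auto simp: P_def pth_def)
    qed
    moreover have "P k (i+m) (v,l) = (0::'a)"
    proof -
      have "i * Suc k \<le> (i+m) * Suc k" by (rule mult_le_mono1) simp
      then have "(v,l) \<noteq> (0, (i+m) * Suc k)" using False by auto
      then show ?thesis unfolding P_def pth_def by (simp only: if_False)
    qed
    ultimately show ?thesis by simp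
  qed
qed

lemma P0_mult: "kq_mult k (pth 0 0) (P k m) = (P k m :: nat \<times> nat \<Rightarrow> 'a::field)"
  using P_mult[of k 0 m] by (simp add: P_def)

lemma mult_P_low: "l < m * Suc k \<Longrightarrow> kq_mult k a (P k m) (v,l) = 0"
  unfolding kq_mult_apply by (auto simp: P_def pth_def intro!: sum.neutral)


definition act :: "nat \<Rightarrow> ('j \<Rightarrow> nat \<times> nat \<Rightarrow> 'a::field) \<Rightarrow> (nat \<times> nat \<Rightarrow> 'a) \<Rightarrow> ('j \<Rightarrow> nat \<times> nat \<Rightarrow> 'a)" where
  "act k f r = (\<lambda>j. kq_mult k (f j) r)"

definition DC :: "nat \<Rightarrow> 'j set \<Rightarrow> ('j \<Rightarrow> nat \<times> nat \<Rightarrow> 'a::field) set" where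
  "DC k J = {f. (\<forall>j. f j \<in> KC k) \<and> (\<forall>j. j \<notin> J \<longrightarrow> f j = 0) \<and> finite {j. f j \<noteq> 0}}"

lemma dsum_simps[simp]: "mcarrier (dsum (KQ k) J) = DC k J" "madd (dsum (KQ k) J) = (+)"
  "mzero (dsum (KQ k) J) = 0" "mact (dsum (KQ k) J) = act k"
  by (auto simp: dsum_def DC_def act_def fun_eq_iff)

lemma act_add_left: "act k (f + g) r = act k f r + act k g r"
  by (simp add: act_def fun_eq_iff kq_mult_add_left)
lemma act_diff_left: "act k (f - g) r = act k f r - act k g r"
  by (simp add: act_def fun_eq_iff kq_mult_diff_left)
lemma act_minus_left: "act k (- f) r = - act k f r"
  by (simp add: act_def fun_eq_iff kq_mult_minus_left)
lemma act_zero_left[simp]: "act k 0 r = 0"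
  by (simp add: act_def fun_eq_iff)
lemma act_add_right: "act k f (r + s) = act k f r + act k f s"
  by (simp add: act_def fun_eq_iff kq_mult_add_right)
lemma act_assoc: "act k (act k f r) s = act k f (kq_mult k r s)"
  by (simp add: act_def fun_eq_iff kq_mult_assoc)
lemma act_one: "act k f (kq_one k) = f"
  by (simp add: act_def fun_eq_iff kq_mult_one_right)
lemma act_neg_one: "act k f (- kq_one k) = - f"
  by (simp add: act_def fun_eq_iff kq_mult_minus_right kq_mult_one_right)

lemma DC_add: "f \<in> DC k J \<Longrightarrow> g \<in> DC k J \<Longrightarrow> f + g \<in> DC k J"
  unfolding DC_def by (auto intro: KC_add finite_subset[of _ "{j. f j \<noteq> 0} \<union> {j. g j \<noteq> 0}"])
lemma DC_minus: "f \<in> DC k J \<Longrightarrow> - f \<in> DC k J"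
  unfolding DC_def by (auto intro: KC_minus)
lemma DC_diff: "f \<in> DC k J \<Longrightarrow> g \<in> DC k J \<Longrightarrow> f - g \<in> DC k J"
  using DC_add[of f k J "-g"] DC_minus[of g k J] by simp
lemma DC_zero[simp]: "0 \<in> DC k J"
  unfolding DC_def by auto
lemma DC_act: "f \<in> DC k J \<Longrightarrow> r \<in> KC k \<Longrightarrow> act k f r \<in> DC k J"
  unfolding DC_def act_def by (auto intro: KC_mult finite_subset[of _ "{j. f j \<noteq> 0}"])
lemma DC_unitv: "j \<in> J \<Longrightarrow> x \<in> KC k \<Longrightarrow> unitv j x \<in> DC k J"
  unfolding DC_def unitv_def by (auto intro: finite_subset[of _ "{j}"])

lemma Fmod_simps[simp]: "mcarrier (Fmod k) = DC k Jidx" "madd (Fmod k) = (+)"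
  "mzero (Fmod k) = 0" "mact (Fmod k) = act k"
  by (simp_all add: Fmod_def)

abbreviation Ic where "Ic k C \<equiv> Isub k C"

lemma Isub_induct[consumes 1, case_names base zero add act]:
  assumes "x \<in> Isub k C"
  and "\<And>\<alpha> n. is_lim \<alpha> \<Longrightarrow> Q (relgen k C \<alpha> n)"
  and "Q 0"
  and "\<And>x y. x \<in> Isub k C \<Longrightarrow> Q x \<Longrightarrow> y \<in> Isub k C \<Longrightarrow> Q y \<Longrightarrow> Q (x + y)"
  and "\<And>x r. x \<in> Isub k C \<Longrightarrow> Q x \<Longrightarrow> r \<in> KC k \<Longrightarrow> Q (act k x r)"
  shows "Q x"
  using assms(1) unfolding Isub_def
proof (induct rule: gen_submod.induct)
  case (gen_base x) then show ?case using assms(2) by auto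
next
  case gen_zero then show ?case using assms(3) by (simp only: Fmod_simps)
next
  case (gen_add x y)
  have "Q (x + y)" using gen_add assms(4)[unfolded Isub_def] by blast
  then show ?case by (simp only: Fmod_simps)
next
  case (gen_act x r)
  have "Q (act k x r)" using gen_act assms(5)[unfolded Isub_def] by simp
  then show ?case by (simp only: Fmod_simps)
qed

lemma I_zero: "0 \<in> Isub k C"
  unfolding Isub_def using gen_submod.gen_zero[where R="KQ k" and M="Fmod k"] by simp
lemma I_add: "x \<in> Isub k C \<Longrightarrow> y \<in> Isub k C \<Longrightarrow> x + y \<in> Isub k C"
  unfolding Isub_def using gen_submod.gen_add[where R="KQ k" and M="Fmod k"] by simp
lemma I_act: "x \<in> Isub k C \<Longrightarrow> r \<in> KC k \<Longrightarrow> act k x r \<in> Isub k C"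
  unfolding Isub_def using gen_submod.gen_act[where R="KQ k" and M="Fmod k"] by simp
lemma I_base: "is_lim \<alpha> \<Longrightarrow> relgen k C \<alpha> n \<in> Isub k C"
  unfolding Isub_def by (rule gen_submod.gen_base) auto
lemma I_minus: "x \<in> Isub k C \<Longrightarrow> - x \<in> Isub k C"
proof -
  assume x: "x \<in> Isub k C"
  have "act k x (- kq_one k) \<in> Isub k C" by (rule I_act[OF x]) (rule KC_minus[OF kq_one_KC])
  then show ?thesis by (simp only: act_neg_one)
qed
lemma I_diff: "x \<in> Isub k C \<Longrightarrow> y \<in> Isub k C \<Longrightarrow> x - y \<in> Isub k C"
  using I_add[of x k C "-y"] I_minus[of y k C] by simp

definition pim :: "nat \<Rightarrow> ('o::wellorder \<Rightarrow> nat \<Rightarrow> 'o) \<Rightarrow> ('o \<times> nat \<Rightarrow> nat \<times> nat \<Rightarrow> 'a::field) \<Rightarrow> _ set" where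
  "pim k C x = rcoset (Fmod k) (Isub k C) x"

lemma pi_alt: "pim k C x = {x + s | s. s \<in> Isub k C}"
  by (simp add: pim_def rcoset_def)

lemma pi_self: "x \<in> pim k C x"
  unfolding pi_alt using I_zero by force

lemma pi_eq_iff: "pim k C x = pim k C y \<longleftrightarrow> x - y \<in> Isub k C"
proof
  assume "pim k C x = pim k C y"
  then have "x \<in> pim k C y" using pi_self by metis
  then obtain s where "x = y + s" "s \<in> Isub k C" unfolding pi_alt by auto
  then show "x - y \<in> Isub k C" by simp
next
  assume d: "x - y \<in> Isub k C"
  have "z \<in> pim k C y" if "z \<in> pim k C x" for z
  proof -
    from that obtain s where s: "z = x + s" "s \<in> Isub k C" unfolding pi_alt by auto
    have "(x - y) + s \<in> Isub k C" by (rule I_add[OF d s(2)])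
    moreover have "z = y + ((x - y) + s)" using s by (simp add: algebra_simps)
    ultimately have "z = y + ((x - y) + s)" "(x - y) + s \<in> Isub k C" by auto
    then show ?thesis unfolding pi_alt by blast
  qed
  moreover have "z \<in> pim k C x" if "z \<in> pim k C y" for z
  proof -
    from that obtain s where s: "z = y + s" "s \<in> Isub k C" unfolding pi_alt by auto
    have "y - x \<in> Isub k C" using I_minus[OF d] by simp
    then have "(y - x) + s \<in> Isub k C" using s(2) by (rule I_add)
    moreover have "z = x + ((y - x) + s)" using s by (simp add: algebra_simps)
    ultimately have "z = x + ((y - x) + s)" "(y - x) + s \<in> Isub k C" by auto
    then show ?thesis unfolding pi_alt by blast
  qed
  ultimately show "pim k C x = pim k C y" by blast
qed

lemma pi_mem_iff: "z \<in> pim k C x \<longleftrightarrow> z - x \<in> Isub k C"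
  unfolding pi_alt by (auto simp: algebra_simps intro!: exI[of _ "z - x"])

abbreviation Qm where "Qm k C \<equiv> quot_rmod (Fmod k) (Isub k C)"

lemma Q_add_pi: "madd (Qm k C) (pim k C x) (pim k C y) = pim k C (x + y)"
proof -
  let ?a = "SOME a. a \<in> pim k C x" and ?b = "SOME b. b \<in> pim k C y"
  have a: "?a \<in> pim k C x" using pi_self by (metis someI)
  have b: "?b \<in> pim k C y" using pi_self by (metis someI)
  have e: "(?a + ?b) - (x + y) = (?a - x) + (?b - y)" by (simp add: algebra_simps)
  have "?a - x \<in> Isub k C" "?b - y \<in> Isub k C" using a b by (simp_all only: pi_mem_iff)
  then have "(?a - x) + (?b - y) \<in> Isub k C" by (rule I_add)
  then have "(?a + ?b) - (x + y) \<in> Isub k C" by (simp only: e)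
  then have "pim k C (?a + ?b) = pim k C (x + y)" by (simp add: pi_eq_iff)
  then show ?thesis by (simp add: quot_rmod_def pim_def[symmetric])
qed

lemma Q_act_pi: "r \<in> KC k \<Longrightarrow> mact (Qm k C) (pim k C x) r = pim k C (act k x r)"
proof -
  assume r: "r \<in> KC k"
  let ?a = "SOME a. a \<in> pim k C x"
  have a: "?a \<in> pim k C x" using pi_self by (metis someI)
  have e: "act k ?a r - act k x r = act k (?a - x) r" by (simp add: act_diff_left)
  have "?a - x \<in> Isub k C" using a by (simp only: pi_mem_iff)
  then have "act k (?a - x) r \<in> Isub k C" using r by (rule I_act)
  then have "act k ?a r - act k x r \<in> Isub k C" by (simp only: e)
  then have "pim k C (act k ?a r) = pim k C (act k x r)" by (simp add: pi_eq_iff)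
  then show ?thesis by (simp add: quot_rmod_def pim_def[symmetric])
qed

lemma Q_zero: "mzero (Qm k C) = pim k C 0"
  by (simp add: quot_rmod_def pim_def)

abbreviation Mm where "Mm k C \<equiv> M_omega1 k C"

lemma M_simps: "madd (Mm k C) = madd (Qm k C)" "mact (Mm k C) = mact (Qm k C)"
   "mzero (Mm k C) = pim k C 0"
   "mcarrier (Mm k C) = gen_submod (KQ k) (Qm k C) {rcoset (Fmod k) (Isub k C) x | x. x \<in> Mgens}"
  by (simp_all add: M_omega1_def sub_rmod_def Let_def Q_zero)

lemma Mgens_DC: "Mgens \<subseteq> DC k Jidx"
  unfolding Mgens_def by (auto intro!: DC_unitv pth_KC simp: Jidx_def)

lemma M_rep: "X \<in> mcarrier (Mm k C) \<Longrightarrow> \<exists>x\<in>DC k Jidx. X = pim k C x"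
  unfolding M_simps
proof (induct rule: gen_submod.induct)
  case (gen_base x) then show ?case using Mgens_DC by (auto simp: pim_def)
next
  case gen_zero then show ?case by (auto simp: Q_zero intro!: bexI[of _ 0])
next
  case (gen_add x y) then show ?case by (metis Q_add_pi DC_add)
next
  case (gen_act x r) then show ?case by (auto simp: Q_act_pi intro: DC_act)
qed

lemma M_add_closed: "X \<in> mcarrier (Mm k C) \<Longrightarrow> Y \<in> mcarrier (Mm k C) \<Longrightarrow> madd (Mm k C) X Y \<in> mcarrier (Mm k C)"
  unfolding M_simps by (rule gen_submod.gen_add)
lemma M_act_closed: "X \<in> mcarrier (Mm k C) \<Longrightarrow> r \<in> KC k \<Longrightarrow> mact (Mm k C) X r \<in> mcarrier (Mm k C)"
  unfolding M_simps by (rule gen_submod.gen_act) auto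
lemma M_zero_closed: "mzero (Mm k C) \<in> mcarrier (Mm k C)"
  using gen_submod.gen_zero[where R="KQ k" and M="Qm k C"] by (simp add: M_simps Q_zero)
lemma M_gen: "x \<in> Mgens \<Longrightarrow> pim k C x \<in> mcarrier (Mm k C)"
  unfolding M_simps by (rule gen_submod.gen_base) (auto simp: pim_def)

lemma M_add_pi: "madd (Mm k C) (pim k C x) (pim k C y) = pim k C (x + y)"
  by (simp add: M_simps Q_add_pi)
lemma M_act_pi: "r \<in> KC k \<Longrightarrow> mact (Mm k C) (pim k C x) r = pim k C (act k x r)"
  by (simp add: M_simps Q_act_pi)

definition sig :: "nat \<Rightarrow> ('o::wellorder \<Rightarrow> nat \<Rightarrow> 'o) \<Rightarrow> ('o \<times> nat \<Rightarrow> nat \<times> nat \<Rightarrow> 'a::field) set \<Rightarrow> ('o \<times> nat \<Rightarrow> nat \<times> nat \<Rightarrow> 'a)" where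
  "sig k C X = (if X = pim k C 0 then 0 else SOME x. x \<in> DC k Jidx \<and> pim k C x = X)"

lemma sig: assumes "X \<in> mcarrier (Mm k C)" shows "sig k C X \<in> DC k Jidx" "pim k C (sig k C X) = X"
proof -
  have "sig k C X \<in> DC k Jidx \<and> pim k C (sig k C X) = X"
  proof (cases "X = pim k C 0")
    case True then show ?thesis by (simp add: sig_def)
  next
    case False
    from M_rep[OF assms] obtain x where "x \<in> DC k Jidx" "X = pim k C x" by blast
    then have "\<exists>x. x \<in> DC k Jidx \<and> pim k C x = X" by blast
    from someI_ex[OF this] False show ?thesis by (simp add: sig_def)
  qed
  then show "sig k C X \<in> DC k Jidx" "pim k C (sig k C X) = X" by auto
qed

lemma sig_zero: "sig k C (mzero (Mm k C)) = 0"
  by (simp add: sig_def M_simps)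


definition th :: "nat \<Rightarrow> ('o::wellorder \<times> nat \<Rightarrow> 'o) \<Rightarrow> ('o \<times> nat \<Rightarrow> nat \<times> nat \<Rightarrow> 'a::field) \<Rightarrow> ('o \<Rightarrow> nat \<times> nat \<Rightarrow> 'a)" where
  "th k h x = (\<lambda>q. if q \<in> range h then (case inv_into UNIV h q of (\<alpha>, n) \<Rightarrow>
      if is_lim \<alpha> then - (\<Sum>j\<le>n. kq_mult k (P k (n-j)) (x (\<alpha>,j))) else 0) else 0)"

lemma th_add: "th k h (x + y) = th k h x + th k h y"
  by (auto simp: th_def fun_eq_iff kq_mult_add_right sum.distrib split: prod.split)
lemma th_minus: "th k h (- x) = - th k h x"
  by (auto simp: th_def fun_eq_iff kq_mult_minus_right sum_negf split: prod.split)
lemma th_diff: "th k h (x - y) = th k h x - th k h y"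
  using th_add[of k h x "-y"] th_minus[of k h y] by simp
lemma th_zero[simp]: "th k h 0 = 0"
  by (auto simp: th_def fun_eq_iff split: prod.split)
lemma th_act: "th k h (act k x r) = act k (th k h x) r"
  by (auto simp: th_def fun_eq_iff act_def kq_mult_minus_left kq_mult_sum_left kq_mult_assoc split: prod.split)

lemma th_at: "inj h \<Longrightarrow> th k h x (h (\<alpha>,m)) = (if is_lim \<alpha> then - (\<Sum>j\<le>m. kq_mult k (P k (m-j)) (x (\<alpha>,j))) else 0)"
  by (simp add: th_def inv_into_f_f)

lemma no_max: assumes "is_omega1 TYPE('o::wellorder)" shows "\<exists>y. (x::'o) < y"
proof (rule ccontr)
  assume "\<not> (\<exists>y. x < y)"
  then have "UNIV = insert x {y. y < x}"
    by (metis (mono_tags) UNIV_eq_I insert_iff mem_Collect_eq not_less_iff_gr_or_eq)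
  moreover have "countable {y. y < x}" using assms by (simp add: is_omega1_def)
  ultimately have "countable (UNIV :: 'o set)" by (metis countable_insert)
  then show False using assms by (simp add: is_omega1_def)
qed

lemma osucc_gt: assumes "is_omega1 TYPE('o::wellorder)" shows "(x::'o) < osucc x"
  using no_max[OF assms, of x] unfolding osucc_def by (metis LeastI)

lemma not_lim_osucc: assumes "is_omega1 TYPE('o::wellorder)" shows "\<not> is_lim (osucc (x::'o))"
proof
  assume "is_lim (osucc x)"
  then obtain z where "x < z" "z < osucc x" using osucc_gt[OF assms, of x] unfolding is_lim_def by blast
  then show False unfolding osucc_def by (metis Least_le not_le)
qed

lemma ladder_facts: assumes "is_omega1 TYPE('o::wellorder)" "ladder_system (C :: 'o \<Rightarrow> nat \<Rightarrow> 'o)" "is_lim \<alpha>"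
  shows "C \<alpha> n < \<alpha>" "\<not> is_lim (C \<alpha> n)"
proof -
  show "C \<alpha> n < \<alpha>" using assms unfolding ladder_system_def by blast
  obtain \<delta> where "C \<alpha> n = (osucc ^^ Suc n) \<delta>" using assms unfolding ladder_system_def by blast
  then show "\<not> is_lim (C \<alpha> n)" using not_lim_osucc[OF assms(1)] by simp
qed

lemma relgen_at:
  fixes C :: "'o::wellorder \<Rightarrow> nat \<Rightarrow> 'o"
  assumes "C \<alpha> n < \<alpha>" "\<not> is_lim (C \<alpha> n)" "is_lim \<beta>"
  shows "(relgen k C \<alpha> n (\<beta>,j) :: nat \<times> nat \<Rightarrow> 'a::field) = (if \<beta> = \<alpha> \<and> j = n then - P k 0 else 0) + (if \<beta> = \<alpha> \<and> j = Suc n then P k 1 else 0)"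
proof -
  have ne: "(\<beta>, j) \<noteq> (C \<alpha> n, 0)" using assms by auto
  have p1: "(P k 1 :: nat \<times> nat \<Rightarrow> 'a) = kq_mult k (pth 0 0) (pth 0 (Suc k))"
    using P0_mult[of k 1, symmetric] by (simp add: P_def)
  have p0: "(P k 0 :: nat \<times> nat \<Rightarrow> 'a) = pth 0 0" by (simp add: P_def)
  have "(relgen k C \<alpha> n (\<beta>,j) :: nat \<times> nat \<Rightarrow> 'a) = unitv (C \<alpha> n, 0) (pth 0 0) (\<beta>,j) - unitv (\<alpha>,n) (pth 0 0) (\<beta>,j)
      + kq_mult k (unitv (\<alpha>, Suc n) (pth 0 0) (\<beta>,j)) (pth 0 (Suc k))"
    by (simp add: relgen_def act_def)
  also have "\<dots> = (if \<beta> = \<alpha> \<and> j = n then - P k 0 else 0) + (if \<beta> = \<alpha> \<and> j = Suc n then P k 1 else 0)"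
  proof -
    have t1: "unitv (C \<alpha> n, 0) (pth 0 0) (\<beta>,j) = (0 :: nat \<times> nat \<Rightarrow> 'a)"
      unfolding unitv_def using ne by (simp only: if_not_P[OF ne] if_False)
    have t2: "unitv (\<alpha>,n) (pth 0 0) (\<beta>,j) = (if \<beta> = \<alpha> \<and> j = n then P k 0 else (0 :: nat \<times> nat \<Rightarrow> 'a))"
      using p0 by (simp add: unitv_def)
    have t3: "kq_mult k (unitv (\<alpha>, Suc n) (pth 0 0) (\<beta>,j)) (pth 0 (Suc k)) = (if \<beta> = \<alpha> \<and> j = Suc n then P k 1 else (0 :: nat \<times> nat \<Rightarrow> 'a))"
      using p1 by (simp add: unitv_def)
    show ?thesis unfolding t1 t2 t3 by simp
  qed
  finally show ?thesis .
qed

lemma th_relgen: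
  fixes C :: "'o::wellorder \<Rightarrow> nat \<Rightarrow> 'o" and h :: "'o \<times> nat \<Rightarrow> 'o"
  assumes "inj h" "C \<alpha> n < \<alpha>" "\<not> is_lim (C \<alpha> n)" "is_lim \<alpha>"
  shows "(th k h (relgen k C \<alpha> n) :: 'o \<Rightarrow> nat \<times> nat \<Rightarrow> 'a::field) = unitv (h (\<alpha>, n)) (pth 0 0)"
proof (rule ext)
  fix q
  show "th k h (relgen k C \<alpha> n) q = unitv (h (\<alpha>, n)) (pth 0 0) q"
  proof (cases "q \<in> range h")
    case False
    then show ?thesis by (auto simp: th_def unitv_def)
  next
    case True
    then obtain \<beta> m where q: "q = h (\<beta>, m)" by auto
    show ?thesis
    proof (cases "is_lim \<beta>")
      case False
      then have "(\<beta>, m) \<noteq> (\<alpha>, n)" using assms by auto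
      then have "h (\<beta>, m) \<noteq> h (\<alpha>, n)" using assms(1) by (meson injD)
      then show ?thesis using False by (simp add: q th_at[OF assms(1)] unitv_def)
    next
      case lim: True
      have "th k h (relgen k C \<alpha> n) q = - (\<Sum>j\<le>m. kq_mult k (P k (m-j))
           ((if \<beta> = \<alpha> \<and> j = n then - P k 0 else 0) + (if \<beta> = \<alpha> \<and> j = Suc n then P k 1 else 0)))"
        by (simp add: q th_at[OF assms(1)] lim relgen_at[where C=C and \<alpha>=\<alpha> and n=n, OF assms(2,3) lim])
      also have "\<dots> = - ((\<Sum>j\<le>m. if j = n then (if \<beta> = \<alpha> then - P k (m - j) else 0) else 0)
            + (\<Sum>j\<le>m. if j = Suc n then (if \<beta> = \<alpha> then P k (m - j + 1) else 0) else 0))"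
        unfolding sum.distrib[symmetric]
      proof (intro arg_cong[where f=uminus] sum.cong refl)
        fix j
        have a: "kq_mult k (P k a) (P k 0) = (P k a :: nat \<times> nat \<Rightarrow> 'a)" "kq_mult k (P k a) (P k 1) = (P k (a+1) :: nat \<times> nat \<Rightarrow> 'a)" for a
          using P_mult[of k a 0] P_mult[of k a 1] by simp_all
        show "kq_mult k (P k (m-j)) ((if \<beta> = \<alpha> \<and> j = n then - P k 0 else 0) + (if \<beta> = \<alpha> \<and> j = Suc n then P k 1 else 0))
          = (if j = n then (if \<beta> = \<alpha> then - P k (m - j) else 0) else 0)
            + (if j = Suc n then (if \<beta> = \<alpha> then P k (m - j + 1) else 0) else 0)"
          by (cases "\<beta> = \<alpha>"; cases "j = n"; cases "j = Suc n") (simp_all add: P_mult kq_mult_add_right kq_mult_minus_right)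
      qed
      also have "\<dots> = - ((if n \<le> m then (if \<beta> = \<alpha> then - P k (m - n) else 0) else 0)
            + (if Suc n \<le> m then (if \<beta> = \<alpha> then P k (m - Suc n + 1) else 0) else 0))"
        by (simp only: sum.delta finite_atMost atMost_iff)
      also have "\<dots> = (if \<beta> = \<alpha> \<and> m = n then P k 0 else 0)"
      proof (cases "\<beta> = \<alpha>")
        case True
        show ?thesis
        proof (cases "n < m")
          case True
          then have "m - Suc n + 1 = m - n" by simp
          then show ?thesis using True \<open>\<beta> = \<alpha>\<close> by simp
        next
          case False
          then show ?thesis using \<open>\<beta> = \<alpha>\<close> by (cases "n = m") simp_all
        qed
      qed simp
      also have "\<dots> = unitv (h (\<alpha>, n)) (pth 0 0) q"
        by (simp add: q unitv_def P_def inj_eq[OF assms(1)])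
      finally show ?thesis .
    qed
  qed
qed

lemma th_I:
  fixes x :: "'o::wellorder \<times> nat \<Rightarrow> nat \<times> nat \<Rightarrow> 'a::field"
  assumes "inj h" "is_omega1 TYPE('o)" "ladder_system (C :: 'o \<Rightarrow> nat \<Rightarrow> 'o)"
    and "x \<in> Isub k C"
  shows "th k h x \<in> DC k (UNIV :: 'o set)"
  using assms(4)
proof (induct rule: Isub_induct)
  case (base \<alpha> n)
  have "(th k h (relgen k C \<alpha> n) :: 'o \<Rightarrow> nat \<times> nat \<Rightarrow> 'a) = unitv (h (\<alpha>, n)) (pth 0 0)"
    by (rule th_relgen[where C=C and \<alpha>=\<alpha> and n=n, OF assms(1) ladder_facts[OF assms(2,3) base] base])
  then show ?case by (simp add: DC_unitv pth_KC)
next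
  case zero then show ?case by (simp only: th_zero DC_zero)
next
  case (add x y) show ?case unfolding th_add by (rule DC_add[OF add(2) add(4)])
next
  case (act x r) show ?case unfolding th_act by (rule DC_act[OF act(2) act(3)])
qed


definition Emod :: "nat \<Rightarrow> ('o::wellorder \<Rightarrow> nat \<Rightarrow> 'o) \<Rightarrow> ('o \<times> nat \<Rightarrow> 'o) \<Rightarrow>
   (nat \<times> nat \<Rightarrow> 'a::field, ('o \<Rightarrow> nat \<times> nat \<Rightarrow> 'a) \<times> ('o \<times> nat \<Rightarrow> nat \<times> nat \<Rightarrow> 'a) set) rmod" where
  "Emod k C h = \<lparr> mcarrier = DC k UNIV \<times> mcarrier (Mm k C),
     madd = (\<lambda>(w1,X1) (w2,X2). (w1 + w2 + th k h (sig k C X1 + sig k C X2 - sig k C (madd (Mm k C) X1 X2)), madd (Mm k C) X1 X2)),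
     mzero = (0, mzero (Mm k C)),
     mact = (\<lambda>(w,X) r. (act k w r + th k h (act k (sig k C X) r - sig k C (mact (Mm k C) X r)), mact (Mm k C) X r)) \<rparr>"

lemma E_simps: "mcarrier (Emod k C h) = DC k UNIV \<times> mcarrier (Mm k C)"
  "madd (Emod k C h) (w1,X1) (w2,X2) = (w1 + w2 + th k h (sig k C X1 + sig k C X2 - sig k C (madd (Mm k C) X1 X2)), madd (Mm k C) X1 X2)"
  "mzero (Emod k C h) = (0, mzero (Mm k C))"
  "mact (Emod k C h) (w,X) r = (act k w r + th k h (act k (sig k C X) r - sig k C (mact (Mm k C) X r)), mact (Mm k C) X r)"
  by (simp_all add: Emod_def)

context
  fixes k :: nat and C :: "'o::wellorder \<Rightarrow> nat \<Rightarrow> 'o" and h :: "'o \<times> nat \<Rightarrow> 'o"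
  assumes hinj: "inj h" and om: "is_omega1 TYPE('o)" and lad: "ladder_system C"
begin

lemma M_assoc: assumes "X \<in> mcarrier (Mm k C)" "Y \<in> mcarrier (Mm k C)" "Z \<in> mcarrier (Mm k C)"
  shows "madd (Mm k C) (madd (Mm k C) X Y) Z = madd (Mm k C) X (madd (Mm k C) Y Z)"
proof -
  obtain x y z where "X = pim k C x" "Y = pim k C y" "Z = pim k C z" using assms M_rep by meson
  then show ?thesis by (simp only: M_add_pi add.assoc)
qed
lemma M_comm: assumes "X \<in> mcarrier (Mm k C)" "Y \<in> mcarrier (Mm k C)"
  shows "madd (Mm k C) X Y = madd (Mm k C) Y X"
proof -
  obtain x y where "X = pim k C x" "Y = pim k C y" using assms M_rep by meson
  then show ?thesis by (simp only: M_add_pi add.commute)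
qed
lemma M_zero_left: assumes "X \<in> mcarrier (Mm k C)" shows "madd (Mm k C) (mzero (Mm k C)) X = X"
proof -
  obtain x where "X = pim k C x" using assms M_rep by meson
  then show ?thesis by (simp only: M_add_pi M_simps(3) add_0)
qed
lemma M_act_add_r: assumes "X \<in> mcarrier (Mm k C)" "r \<in> KC k" "s \<in> KC k"
  shows "mact (Mm k C) X (r + s) = madd (Mm k C) (mact (Mm k C) X r) (mact (Mm k C) X s)"
proof -
  obtain x where "X = pim k C x" using assms M_rep by meson
  then show ?thesis using assms KC_add[OF assms(2,3)] by (simp only: M_add_pi M_act_pi act_add_right)
qed
lemma M_act_add_l: assumes "X \<in> mcarrier (Mm k C)" "Y \<in> mcarrier (Mm k C)" "r \<in> KC k"
  shows "mact (Mm k C) (madd (Mm k C) X Y) r = madd (Mm k C) (mact (Mm k C) X r) (mact (Mm k C) Y r)"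
proof -
  obtain x y where "X = pim k C x" "Y = pim k C y" using assms M_rep by meson
  then show ?thesis using assms by (simp only: M_add_pi M_act_pi act_add_left)
qed
lemma M_act_assoc: assumes "X \<in> mcarrier (Mm k C)" "r \<in> KC k" "s \<in> KC k"
  shows "mact (Mm k C) X (kq_mult k r s) = mact (Mm k C) (mact (Mm k C) X r) s"
proof -
  obtain x where "X = pim k C x" using assms M_rep by meson
  then show ?thesis using assms KC_mult[OF assms(2,3)] by (simp only: M_act_pi act_assoc)
qed
lemma M_act_one: assumes "X \<in> mcarrier (Mm k C)" shows "mact (Mm k C) X (kq_one k) = X"
proof -
  obtain x where "X = pim k C x" using assms M_rep by meson
  then show ?thesis by (simp only: M_act_pi[OF kq_one_KC] act_one)
qed
lemma M_neg: assumes "X \<in> mcarrier (Mm k C)" shows "madd (Mm k C) X (mact (Mm k C) X (- kq_one k)) = mzero (Mm k C)"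
proof -
  obtain x where "X = pim k C x" using assms M_rep by meson
  then show ?thesis by (simp only: M_add_pi M_act_pi[OF KC_minus[OF kq_one_KC]] act_neg_one M_simps(3) right_minus)
qed
lemma M_zero_act: "r \<in> KC k \<Longrightarrow> mact (Mm k C) (mzero (Mm k C)) r = mzero (Mm k C)"
  by (simp only: M_act_pi M_simps(3) act_zero_left)

abbreviation "D X Y \<equiv> sig k C X + sig k C Y - sig k C (madd (Mm k C) X Y)"
abbreviation "Dm X r \<equiv> act k (sig k C X) r - sig k C (mact (Mm k C) X r)"

lemma D_I: "X \<in> mcarrier (Mm k C) \<Longrightarrow> Y \<in> mcarrier (Mm k C) \<Longrightarrow> D X Y \<in> Isub k C"
proof -
  assume X: "X \<in> mcarrier (Mm k C)" and Y: "Y \<in> mcarrier (Mm k C)"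
  have "pim k C (sig k C X + sig k C Y) = madd (Mm k C) X Y"
    using sig(2)[OF X] sig(2)[OF Y] M_add_pi by metis
  also have "\<dots> = pim k C (sig k C (madd (Mm k C) X Y))"
    using sig(2)[OF M_add_closed[OF X Y]] by simp
  finally show ?thesis by (simp add: pi_eq_iff)
qed

lemma Dm_I: "X \<in> mcarrier (Mm k C) \<Longrightarrow> r \<in> KC k \<Longrightarrow> Dm X r \<in> Isub k C"
proof -
  assume X: "X \<in> mcarrier (Mm k C)" and r: "r \<in> KC k"
  have "pim k C (act k (sig k C X) r) = mact (Mm k C) X r"
    using sig(2)[OF X] M_act_pi[OF r] by metis
  also have "\<dots> = pim k C (sig k C (mact (Mm k C) X r))"
    using sig(2)[OF M_act_closed[OF X r]] by simp
  finally show ?thesis by (simp add: pi_eq_iff)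
qed

lemma thD: "X \<in> mcarrier (Mm k C) \<Longrightarrow> Y \<in> mcarrier (Mm k C) \<Longrightarrow> th k h (D X Y) \<in> DC k UNIV"
  by (rule th_I[OF hinj om lad D_I])
lemma thDm: "X \<in> mcarrier (Mm k C) \<Longrightarrow> r \<in> KC k \<Longrightarrow> th k h (Dm X r) \<in> DC k UNIV"
  by (rule th_I[OF hinj om lad Dm_I])

lemma th_sum_eq: "a + b = c + d \<Longrightarrow> th k h a + th k h b = th k h c + th k h d"
  by (metis th_add)

abbreviation "Mc \<equiv> mcarrier (Mm k C)"
abbreviation "Em \<equiv> Emod k C h"

lemma E_zero_in: "mzero Em \<in> mcarrier Em"
  by (simp add: E_simps M_zero_closed)

lemma E_add_closed: "w1 \<in> DC k UNIV \<Longrightarrow> w2 \<in> DC k UNIV \<Longrightarrow> X1 \<in> Mc \<Longrightarrow> X2 \<in> Mc \<Longrightarrow>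
  madd Em (w1,X1) (w2,X2) \<in> mcarrier Em"
  by (simp add: E_simps DC_add thD M_add_closed)

lemma E_assoc:
  assumes "X1 \<in> Mc" "X2 \<in> Mc" "X3 \<in> Mc"
  shows "madd Em (madd Em (w1,X1) (w2,X2)) (w3,X3) = madd Em (w1,X1) (madd Em (w2,X2) (w3,X3))"
proof -
  let ?m = "madd (Mm k C)"
  have a: "?m (?m X1 X2) X3 = ?m X1 (?m X2 X3)" by (rule M_assoc[OF assms])
  have "D X1 X2 + D (?m X1 X2) X3 = D X2 X3 + D X1 (?m X2 X3)"
    using a by (simp add: algebra_simps)
  then have k: "th k h (D X1 X2) + th k h (D (?m X1 X2) X3) = th k h (D X2 X3) + th k h (D X1 (?m X2 X3))"
    by (rule th_sum_eq)
  have "w1 + w2 + th k h (D X1 X2) + w3 + th k h (D (?m X1 X2) X3)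
      = w1 + w2 + w3 + (th k h (D X1 X2) + th k h (D (?m X1 X2) X3))" by (simp add: algebra_simps)
  also have "\<dots> = w1 + w2 + w3 + (th k h (D X2 X3) + th k h (D X1 (?m X2 X3)))" by (simp only: k)
  also have "\<dots> = w1 + (w2 + w3 + th k h (D X2 X3)) + th k h (D X1 (?m X2 X3))" by (simp add: algebra_simps)
  finally show ?thesis by (simp add: E_simps a)
qed

lemma E_comm:
  assumes "X1 \<in> Mc" "X2 \<in> Mc"
  shows "madd Em (w1,X1) (w2,X2) = madd Em (w2,X2) (w1,X1)"
proof -
  have c: "madd (Mm k C) X1 X2 = madd (Mm k C) X2 X1" by (rule M_comm[OF assms])
  have "D X1 X2 = D X2 X1" using c by (simp add: algebra_simps)
  then show ?thesis by (simp add: E_simps c algebra_simps)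
qed

lemma E_zero_left:
  assumes "X \<in> Mc"
  shows "madd Em (mzero Em) (w,X) = (w,X)"
  using M_zero_left[OF assms] by (simp add: E_simps sig_zero)

lemma E_neg:
  assumes "w \<in> DC k UNIV" "X \<in> Mc"
  shows "\<exists>y\<in>mcarrier Em. madd Em (w,X) y = mzero Em"
proof -
  let ?Y = "mact (Mm k C) X (- kq_one k)"
  have Y: "?Y \<in> Mc" by (rule M_act_closed[OF assms(2) KC_minus[OF kq_one_KC]])
  let ?w = "- w - th k h (D X ?Y)"
  have w: "?w \<in> DC k UNIV" using assms(1) thD[OF assms(2) Y] by (intro DC_diff DC_minus)
  have eq: "madd Em (w,X) (?w, ?Y) = mzero Em"
    using M_neg[OF assms(2)] by (simp add: E_simps)
  have mem: "(?w, ?Y) \<in> mcarrier Em" using w Y by (simp add: E_simps)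
  show ?thesis using eq mem by blast
qed

lemma E_act_closed: "w \<in> DC k UNIV \<Longrightarrow> X \<in> Mc \<Longrightarrow> r \<in> KC k \<Longrightarrow> mact Em (w,X) r \<in> mcarrier Em"
  by (simp add: E_simps DC_add DC_act thDm M_act_closed)

lemma E_act_add_r:
  assumes "X \<in> Mc" "r \<in> KC k" "s \<in> KC k"
  shows "mact Em (w,X) (r + s) = madd Em (mact Em (w,X) r) (mact Em (w,X) s)"
proof -
  let ?a = "mact (Mm k C) X"
  have e: "?a (r + s) = madd (Mm k C) (?a r) (?a s)" by (rule M_act_add_r[OF assms])
  have "Dm X (r + s) = Dm X r + Dm X s + D (?a r) (?a s)"
    using e by (simp add: act_add_right algebra_simps)
  then have "th k h (Dm X (r + s)) = th k h (Dm X r + Dm X s + D (?a r) (?a s))"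
    by (rule arg_cong)
  then have k: "th k h (Dm X (r + s)) = th k h (Dm X r) + th k h (Dm X s) + th k h (D (?a r) (?a s))"
    by (simp only: th_add)
  show ?thesis by (simp only: E_simps k) (simp add: e act_add_right algebra_simps)
qed

lemma E_act_add_l:
  assumes "X1 \<in> Mc" "X2 \<in> Mc" "r \<in> KC k"
  shows "mact Em (madd Em (w1,X1) (w2,X2)) r = madd Em (mact Em (w1,X1) r) (mact Em (w2,X2) r)"
proof -
  let ?a = "\<lambda>X. mact (Mm k C) X r" and ?m = "madd (Mm k C)"
  have e: "?a (?m X1 X2) = ?m (?a X1) (?a X2)" by (rule M_act_add_l[OF assms])
  have "act k (D X1 X2) r + Dm (?m X1 X2) r = Dm X1 r + Dm X2 r + D (?a X1) (?a X2)"
    using e by (simp add: act_add_left act_diff_left algebra_simps)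
  then have "th k h (act k (D X1 X2) r + Dm (?m X1 X2) r) = th k h (Dm X1 r + Dm X2 r + D (?a X1) (?a X2))"
    by (rule arg_cong)
  then have k: "act k (th k h (D X1 X2)) r + th k h (Dm (?m X1 X2) r) = th k h (Dm X1 r) + th k h (Dm X2 r) + th k h (D (?a X1) (?a X2))"
    by (simp only: th_add th_act)
  have "act k (w1 + w2 + th k h (D X1 X2)) r + th k h (Dm (?m X1 X2) r)
     = act k w1 r + act k w2 r + (act k (th k h (D X1 X2)) r + th k h (Dm (?m X1 X2) r))"
    by (simp add: act_add_left algebra_simps)
  also have "\<dots> = act k w1 r + act k w2 r + (th k h (Dm X1 r) + th k h (Dm X2 r) + th k h (D (?a X1) (?a X2)))"
    by (simp only: k)
  finally show ?thesis by (simp add: E_simps e algebra_simps)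
qed

lemma E_act_assoc:
  assumes "X \<in> Mc" "r \<in> KC k" "s \<in> KC k"
  shows "mact Em (w,X) (kq_mult k r s) = mact Em (mact Em (w,X) r) s"
proof -
  let ?a = "mact (Mm k C)"
  have e: "?a X (kq_mult k r s) = ?a (?a X r) s" by (rule M_act_assoc[OF assms])
  have "Dm X (kq_mult k r s) = act k (Dm X r) s + Dm (?a X r) s"
    using e by (simp add: act_diff_left act_assoc algebra_simps)
  then have "th k h (Dm X (kq_mult k r s)) = th k h (act k (Dm X r) s + Dm (?a X r) s)"
    by (rule arg_cong)
  then have k: "th k h (Dm X (kq_mult k r s)) = act k (th k h (Dm X r)) s + th k h (Dm (?a X r) s)"
    by (simp only: th_add th_act)
  show ?thesis by (simp only: E_simps k) (simp add: e act_add_left act_assoc algebra_simps)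
qed

lemma E_act_one:
  assumes "w \<in> DC k UNIV" "X \<in> Mc"
  shows "mact Em (w,X) (kq_one k) = (w,X)"
  using M_act_one[OF assms(2)] by (simp add: E_simps act_one)

lemma E_module: "right_module (KQ k) Em"
proof -
  have c: "mcarrier Em = DC k UNIV \<times> Mc" by (rule E_simps(1))
  note cl = E_add_closed[unfolded c] E_act_closed[unfolded c]
  show ?thesis unfolding right_module_def KQ_simps
  proof (intro conjI)
    show "mzero Em \<in> mcarrier Em" by (rule E_zero_in)
    show "\<forall>x\<in>mcarrier Em. \<forall>y\<in>mcarrier Em. madd Em x y \<in> mcarrier Em"
      unfolding c by (auto intro: cl)
    show "\<forall>x\<in>mcarrier Em. \<forall>y\<in>mcarrier Em. \<forall>z\<in>mcarrier Em. madd Em (madd Em x y) z = madd Em x (madd Em y z)"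
      unfolding c by (auto intro: E_assoc)
    show "\<forall>x\<in>mcarrier Em. \<forall>y\<in>mcarrier Em. madd Em x y = madd Em y x"
      unfolding c by (auto intro: E_comm)
    show "\<forall>x\<in>mcarrier Em. madd Em (mzero Em) x = x"
      unfolding c by (auto intro: E_zero_left)
    show "\<forall>x\<in>mcarrier Em. \<exists>y\<in>mcarrier Em. madd Em x y = mzero Em"
      using E_neg unfolding c by blast
    show "\<forall>x\<in>mcarrier Em. \<forall>r\<in>KC k. mact Em x r \<in> mcarrier Em"
      unfolding c by (auto intro: cl)
    show "\<forall>x\<in>mcarrier Em. \<forall>r\<in>KC k. \<forall>s\<in>KC k. mact Em x (r + s) = madd Em (mact Em x r) (mact Em x s)"
      unfolding c by (auto intro: E_act_add_r)
    show "\<forall>x\<in>mcarrier Em. \<forall>y\<in>mcarrier Em. \<forall>r\<in>KC k. mact Em (madd Em x y) r = madd Em (mact Em x r) (mact Em y r)"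
      unfolding c by (auto intro: E_act_add_l)
    show "\<forall>x\<in>mcarrier Em. \<forall>r\<in>KC k. \<forall>s\<in>KC k. mact Em x (kq_mult k r s) = mact Em (mact Em x r) s"
      unfolding c by (auto intro: E_act_assoc)
    show "\<forall>x\<in>mcarrier Em. mact Em x (kq_one k) = x"
      unfolding c by (auto intro: E_act_one)
  qed
qed

end


unbundle cardinal_syntax


lemma countable_bounded:
  assumes om: "is_omega1 TYPE('o::wellorder)" and X: "countable (X :: 'o set)"
  shows "\<exists>b. \<forall>x\<in>X. x < b"
proof (rule ccontr)
  assume "\<not> (\<exists>b. \<forall>x\<in>X. x < b)"
  then have "\<forall>b. \<exists>x\<in>X. b \<le> x" by (auto simp: not_less)
  then have "UNIV \<subseteq> X \<union> (\<Union>x\<in>X. {y. y < x})" by (auto simp: le_less)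
  moreover have "countable (X \<union> (\<Union>x\<in>X. {y. y < x}))"
    using X om by (auto simp: is_omega1_def)
  ultimately have "countable (UNIV :: 'o set)" by (rule countable_subset)
  then show False using om by (simp add: is_omega1_def)
qed

lemma club:
  assumes om: "is_omega1 TYPE('o::wellorder)" and T: "\<And>\<gamma>. countable (T \<gamma> :: 'o set)"
  shows "\<exists>\<alpha>::'o. is_lim \<alpha> \<and> (\<forall>\<gamma><\<alpha>. \<alpha> \<notin> T \<gamma>)"
proof -
  define P where "P = (\<lambda>\<delta> \<delta>'. \<delta> < \<delta>' \<and> (\<forall>\<gamma><\<delta>. \<forall>\<beta>\<in>T \<gamma>. \<beta> < (\<delta>'::'o)))"
  have ex: "\<exists>\<delta>'. P \<delta> \<delta>'" for \<delta>
  proof -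
    have "countable (insert \<delta> (\<Union>\<gamma>\<in>{\<gamma>. \<gamma> < \<delta>}. T \<gamma>))"
      using om T by (auto simp: is_omega1_def)
    from countable_bounded[OF om this] obtain b where "\<forall>x\<in>insert \<delta> (\<Union>\<gamma>\<in>{\<gamma>. \<gamma> < \<delta>}. T \<gamma>). x < b" ..
    then show ?thesis unfolding P_def by (intro exI[of _ b]) auto
  qed
  define nxt where "nxt = (\<lambda>\<delta>. SOME \<delta>'. P \<delta> \<delta>')"
  have nxt: "P \<delta> (nxt \<delta>)" for \<delta> unfolding nxt_def by (rule someI_ex[OF ex])
  define d where "d = (\<lambda>n. (nxt ^^ n) ozero)"
  have dS: "d (Suc n) = nxt (d n)" for n by (simp add: d_def)
  have dlt: "d n < d (Suc n)" for n using nxt[of "d n"] by (simp add: dS P_def)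
  have "countable (range d)" by simp
  from countable_bounded[OF om this] obtain b where "\<forall>x\<in>range d. x < b" ..
  then have exb: "\<exists>a. \<forall>n. d n < a" by auto
  define \<alpha> where "\<alpha> = (LEAST a. \<forall>n. d n < a)"
  have below: "\<forall>n. d n < \<alpha>" unfolding \<alpha>_def using exb by (rule LeastI_ex)
  have cof: "\<exists>n. y \<le> d n" if "y < \<alpha>" for y
  proof (rule ccontr)
    assume "\<not> (\<exists>n. y \<le> d n)"
    then have "\<forall>n. d n < y" by (auto simp: not_le)
    then have "\<alpha> \<le> y" unfolding \<alpha>_def by (rule Least_le)
    then show False using that by simp
  qed
  have lim: "is_lim \<alpha>"
    unfolding is_lim_def
  proof (intro conjI allI impI)
    show "\<exists>y. y < \<alpha>" using below by blast
    fix y assume "y < \<alpha>"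
    then obtain n where "y \<le> d n" using cof by blast
    then show "\<exists>z. y < z \<and> z < \<alpha>" using dlt[of n] below by (intro exI[of _ "d (Suc n)"]) auto
  qed
  have "\<alpha> \<notin> T \<gamma>" if g: "\<gamma> < \<alpha>" for \<gamma>
  proof
    assume a: "\<alpha> \<in> T \<gamma>"
    obtain n where "\<gamma> \<le> d n" using cof[OF g] by blast
    then have "\<gamma> < d (Suc n)" using dlt[of n] by simp
    then have "\<alpha> < nxt (d (Suc n))" using nxt[of "d (Suc n)"] a by (auto simp: P_def)
    then have "\<alpha> < d (Suc (Suc n))" by (simp add: dS)
    then show False using below by (metis less_asym)
  qed
  then show ?thesis using lim by blast
qed

lemma inj_exists:
  assumes om: "is_omega1 TYPE('o::wellorder)"
  shows "\<exists>h :: 'o \<times> nat \<Rightarrow> 'o. inj h"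
proof -
  have inf: "\<not> finite (UNIV :: 'o set)"
    using om countable_finite by (auto simp: is_omega1_def)
  obtain g :: "nat \<Rightarrow> 'o" where g: "inj g" using infinite_countable_subset[OF inf] by blast
  have "|UNIV :: nat set| \<le>o |UNIV :: 'o set|"
    using g unfolding card_of_ordLeq[symmetric] by blast
  then have "|(UNIV :: 'o set) \<times> (UNIV :: nat set)| =o |UNIV :: 'o set|"
    using card_of_Times_infinite[OF inf] by blast
  then have "|(UNIV :: 'o set) \<times> (UNIV :: nat set)| \<le>o |UNIV :: 'o set|"
    using ordIso_iff_ordLeq by blast
  then obtain f :: "'o \<times> nat \<Rightarrow> 'o" where "inj_on f (UNIV \<times> UNIV)"
    unfolding card_of_ordLeq[symmetric] by blast
  then show ?thesis by auto
qed


context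
  fixes k :: nat and C :: "'o::wellorder \<Rightarrow> nat \<Rightarrow> 'o" and h :: "'o \<times> nat \<Rightarrow> 'o"
  assumes hinj: "inj h" and om: "is_omega1 TYPE('o)" and lad: "ladder_system C"
begin

lemma gen_M: "pim k C (unitv (\<gamma>, 0) (pth 0 0)) \<in> mcarrier (Mm k C)"
proof (rule M_gen)
  show "unitv (\<gamma>, 0) (pth 0 0) \<in> Mgens"
    unfolding Mgens_def by (cases "is_lim \<gamma>") blast+
qed

lemma Egen_M: "is_lim \<alpha> \<Longrightarrow> pim k C (unitv (\<alpha>, m) (pth 0 0)) \<in> mcarrier (Mm k C)"
  by (rule M_gen) (auto simp: Mgens_def)

lemma no_section:
  fixes s :: "('o \<times> nat \<Rightarrow> nat \<times> nat \<Rightarrow> 'a::field) set \<Rightarrow> ('o \<Rightarrow> nat \<times> nat \<Rightarrow> 'a) \<times> ('o \<times> nat \<Rightarrow> nat \<times> nat \<Rightarrow> 'a) set"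
  assumes hom: "rmod_hom (KQ k) (Mm k C) (Emod k C h) s" and sec: "\<forall>X\<in>mcarrier (Mm k C). snd (s X) = X"
  shows False
proof -
  let ?M = "Mm k C" and ?Mc = "mcarrier (Mm k C)"
  define w where "w X = fst (s X)" for X
  have sX: "s X = (w X, X)" "w X \<in> DC k UNIV" if "X \<in> ?Mc" for X
  proof -
    have "s X \<in> DC k UNIV \<times> ?Mc" using hom that unfolding rmod_hom_def E_simps by (simp add: Pi_iff)
    then show "s X = (w X, X)" "w X \<in> DC k UNIV" using sec that unfolding w_def
      by (metis mem_Sigma_iff prod.collapse)+
  qed
  have w_add: "w (madd ?M X Y) = w X + w Y + th k h (D k C X Y)" if "X \<in> ?Mc" "Y \<in> ?Mc" for X Y
  proof -
    have "s (madd ?M X Y) = madd (Emod k C h) (s X) (s Y)" using hom that unfolding rmod_hom_def by blast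
    then show ?thesis using sX[OF that(1)] sX[OF that(2)] sX[OF M_add_closed[OF that]] by (simp add: E_simps)
  qed
  have w_act: "w (mact ?M X r) = act k (w X) r + th k h (Dm k C X r)" if "X \<in> ?Mc" "r \<in> KC k" for X r
  proof -
    have "s (mact ?M X r) = mact (Emod k C h) (s X) r" using hom that unfolding rmod_hom_def by simp
    then show ?thesis using sX[OF that(1)] sX[OF M_act_closed[OF that]] by (simp add: E_simps)
  qed
  have w_zero: "w (mzero ?M) = 0"
  proof -
    have z: "madd ?M (mzero ?M) (mzero ?M) = mzero ?M" by (rule M_zero_left[OF hinj om lad M_zero_closed])
    have "w (mzero ?M) = w (mzero ?M) + w (mzero ?M) + th k h (D k C (mzero ?M) (mzero ?M))"
      using w_add[OF M_zero_closed M_zero_closed] by (simp only: z)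
    then have "w (mzero ?M) = w (mzero ?M) + w (mzero ?M) + th k h (0 + 0 - 0)"
      by (simp only: z sig_zero)
    then show ?thesis by simp
  qed
  define u where "u x = w (pim k C x) - th k h (x - sig k C (pim k C x))" for x
  have u_add: "u (x + y) = u x + u y" if "pim k C x \<in> ?Mc" "pim k C y \<in> ?Mc" for x y
  proof -
    have "pim k C (x + y) = madd ?M (pim k C x) (pim k C y)" by (simp add: M_add_pi)
    then have "u (x + y) = w (pim k C x) + w (pim k C y) + th k h (D k C (pim k C x) (pim k C y))
       - th k h (x + y - sig k C (madd ?M (pim k C x) (pim k C y)))"
      unfolding u_def using w_add[OF that] by simp
    also have "\<dots> = u x + u y"
      unfolding u_def by (simp only: th_add th_diff) (simp add: algebra_simps)
    finally show ?thesis .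
  qed
  have u_act: "u (act k x r) = act k (u x) r" if "pim k C x \<in> ?Mc" "r \<in> KC k" for x r
  proof -
    have "pim k C (act k x r) = mact ?M (pim k C x) r" using that by (simp add: M_act_pi)
    then have "u (act k x r) = act k (w (pim k C x)) r + th k h (act k (sig k C (pim k C x)) r - sig k C (mact ?M (pim k C x) r))
       - th k h (act k x r - sig k C (mact ?M (pim k C x) r))"
      unfolding u_def using w_act[OF that] by simp
    also have "\<dots> = act k (u x) r"
      unfolding u_def by (simp only: act_diff_left th_act[symmetric] th_diff) (simp add: algebra_simps)
    finally show ?thesis .
  qed
  have u_I: "u x = - th k h x" if "x \<in> Isub k C" for x
  proof -
    have "pim k C x = pim k C 0" using that by (simp add: pi_eq_iff)
    then have "pim k C x = mzero ?M" by (simp add: M_simps)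
    then show ?thesis unfolding u_def by (simp add: w_zero sig_zero)
  qed
  have u_DC: "u x \<in> DC k UNIV" if "pim k C x \<in> ?Mc" for x
  proof -
    have "pim k C x = pim k C (sig k C (pim k C x))" using sig(2)[OF that] by simp
    then have "x - sig k C (pim k C x) \<in> Isub k C" by (simp add: pi_eq_iff)
    then have "th k h (x - sig k C (pim k C x)) \<in> DC k UNIV" by (rule th_I[OF hinj om lad])
    then show ?thesis unfolding u_def using sX(2)[OF that] by (rule DC_diff[rotated])
  qed
  define T where "T \<gamma> = {\<beta>. \<exists>j. u (unitv (\<gamma>, 0) (pth 0 0)) (h (\<beta>, j)) \<noteq> 0}" for \<gamma>
  have Tfin: "countable (T \<gamma>)" for \<gamma>
  proof -
    let ?S = "{q. u (unitv (\<gamma>, 0) (pth 0 0)) q \<noteq> 0}"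
    have "finite ?S" using u_DC[OF gen_M[of \<gamma>]] by (simp add: DC_def)
    then have "finite (h -` ?S)" using hinj by (rule finite_vimageI)
    moreover have "T \<gamma> \<subseteq> fst ` (h -` ?S)"
    proof
      fix \<beta> assume "\<beta> \<in> T \<gamma>"
      then obtain j where "u (unitv (\<gamma>, 0) (pth 0 0)) (h (\<beta>, j)) \<noteq> 0" unfolding T_def by blast
      then show "\<beta> \<in> fst ` (h -` ?S)" by (intro image_eqI[of _ fst "(\<beta>, j)"]) auto
    qed
    ultimately show ?thesis by (meson countable_finite countable_image countable_subset)
  qed
  obtain \<alpha> where lim: "is_lim \<alpha>" and notT: "\<forall>\<gamma><\<alpha>. \<alpha> \<notin> T \<gamma>" using club[where T=T, OF om Tfin] by blast
  have zeroG: "u (unitv (C \<alpha> i, 0) (pth 0 0)) (h (\<alpha>, j)) = 0" for i j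
    using notT ladder_facts(1)[OF om lad lim, of i] unfolding T_def by blast
  define E where "E m = (unitv (\<alpha>, m) (pth 0 0) :: 'o \<times> nat \<Rightarrow> nat \<times> nat \<Rightarrow> 'a)" for m :: nat
  have EM: "pim k C (E m) \<in> ?Mc" for m unfolding E_def by (rule Egen_M[OF lim])
  have p1: "pth 0 (Suc k) = (P k 1 :: nat \<times> nat \<Rightarrow> 'a)" by (simp add: P_def)
  have pK: "pth 0 (Suc k) \<in> (KC k :: (nat \<times> nat \<Rightarrow> 'a) set)" by (rule pth_KC) simp
  have rel: "u (E m) = u (unitv (C \<alpha> m, 0) (pth 0 0)) + act k (u (E (Suc m))) (pth 0 (Suc k)) + unitv (h (\<alpha>, m)) (pth 0 0)" for m
  proof -
    let ?r = "relgen k C \<alpha> m" and ?G = "unitv (C \<alpha> m, 0) (pth 0 0)"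
    have eq: "?r + E m = ?G + act k (E (Suc m)) (pth 0 (Suc k))"
      unfolding relgen_def E_def by simp
    have rI: "?r \<in> Isub k C" by (rule I_base[OF lim])
    have rM: "pim k C ?r \<in> ?Mc"
    proof -
      have "pim k C ?r = pim k C 0" using rI by (simp add: pi_eq_iff)
      then have "pim k C ?r = mzero ?M" by (simp add: M_simps)
      then show ?thesis by (metis M_zero_closed)
    qed
    have actM: "pim k C (act k (E (Suc m)) (pth 0 (Suc k))) \<in> ?Mc"
      using M_act_closed[OF EM pK] by (simp add: M_act_pi[OF pK])
    have "u ?r + u (E m) = u (?r + E m)" by (rule u_add[OF rM EM, symmetric])
    also have "\<dots> = u (?G + act k (E (Suc m)) (pth 0 (Suc k)))" by (simp only: eq)
    also have "\<dots> = u ?G + u (act k (E (Suc m)) (pth 0 (Suc k)))" by (rule u_add[OF gen_M actM])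
    also have "\<dots> = u ?G + act k (u (E (Suc m))) (pth 0 (Suc k))" by (simp only: u_act[OF EM pK])
    finally have "u ?r + u (E m) = u ?G + act k (u (E (Suc m))) (pth 0 (Suc k))" .
    moreover have "u ?r = - unitv (h (\<alpha>, m)) (pth 0 0)"
      using u_I[OF rI] th_relgen[where C=C and \<alpha>=\<alpha> and n=m, OF hinj ladder_facts[OF om lad lim] lim] by simp
    ultimately show ?thesis by (simp add: algebra_simps)
  qed
  have "finite {q. u (E 0) q \<noteq> 0}" using u_DC[OF EM] by (simp add: DC_def)
  then have "finite ((\<lambda>j. h (\<alpha>, j)) -` {q. u (E 0) q \<noteq> 0})"
    using hinj by (intro finite_vimageI) (auto simp: inj_def)
  then obtain j where "j \<notin> (\<lambda>j. h (\<alpha>, j)) -` {q. u (E 0) q \<noteq> 0}"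
    using ex_new_if_finite[OF infinite_UNIV_nat] by blast
  then have j: "u (E 0) (h (\<alpha>, j)) = 0" by simp
  define a where "a m = u (E m) (h (\<alpha>, j))" for m
  have a_rel: "a m = kq_mult k (a (Suc m)) (P k 1) + (if m = j then P k 0 else 0)" for m
  proof -
    have "unitv (h (\<alpha>, m)) (pth 0 0) (h (\<alpha>, j)) = (if m = j then P k 0 else 0)"
      by (simp add: unitv_def P_def inj_eq[OF hinj])
    then show ?thesis unfolding a_def using rel[of m] zeroG[of m j] by (simp add: act_def p1)
  qed
  have claim: "a 0 = kq_mult k (a (Suc m)) (P k (Suc m)) + (if j \<le> m then P k j else 0)" for m
  proof (induct m)
    case 0 then show ?case using a_rel[of 0] by auto
  next
    case (Suc m)
    have "kq_mult k (a (Suc m)) (P k (Suc m)) = kq_mult k (a (Suc (Suc m))) (P k (Suc (Suc m)))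
        + (if Suc m = j then P k (Suc m) else 0)"
      by (subst a_rel) (simp add: kq_mult_add_left kq_mult_assoc P_mult)
    then show ?case using Suc by (cases "j \<le> m"; cases "j = Suc m") (auto simp: not_le)
  qed
  have "a 0 = 0" using j by (simp add: a_def)
  then have "(0 :: nat \<times> nat \<Rightarrow> 'a) = kq_mult k (a (Suc j)) (P k (Suc j)) + P k j"
    using claim[of j] by simp
  then have "(0 :: 'a) = kq_mult k (a (Suc j)) (P k (Suc j)) (0, j * Suc k) + P k j (0, j * Suc k)"
    by (metis plus_fun_apply zero_fun_apply)
  also have "\<dots> = 1" using mult_P_low[of "j * Suc k" "Suc j" k "a (Suc j)" 0]
    by (simp add: P_def pth_def)
  finally show False by simp
qed

end


theorem claim2p7:
  fixes k :: nat and C :: "'o::wellorder \<Rightarrow> nat \<Rightarrow> 'o"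
  assumes "alg_closed TYPE('a::field)"
    and "is_omega1 TYPE('o)"
    and "ladder_system C"
  shows "Ext1_nonzero (KQ k :: (nat \<times> nat \<Rightarrow> 'a) ring) (M_omega1 k C)
           (dsum (KQ k) (UNIV :: 'o set))"
proof -
  note om = assms(2) and lad = assms(3)
  obtain h :: "'o \<times> nat \<Rightarrow> 'o" where hinj: "inj h" using inj_exists[OF om] by blast
  let ?M = "M_omega1 k C :: (nat \<times> nat \<Rightarrow> 'a, ('o \<times> nat \<Rightarrow> nat \<times> nat \<Rightarrow> 'a) set) rmod"
  let ?E = "Emod k C h :: (nat \<times> nat \<Rightarrow> 'a, ('o \<Rightarrow> nat \<times> nat \<Rightarrow> 'a) \<times> ('o \<times> nat \<Rightarrow> nat \<times> nat \<Rightarrow> 'a) set) rmod"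
  let ?f = "\<lambda>w. (w, mzero ?M)"
  have z: "madd ?M (mzero ?M) (mzero ?M) = mzero ?M" by (rule M_zero_left[OF hinj om lad M_zero_closed])
  have hom_f: "rmod_hom (KQ k) (dsum (KQ k) UNIV) ?E ?f"
    unfolding rmod_hom_def dsum_simps KQ_simps
  proof (intro conjI ballI)
    show "?f \<in> DC k UNIV \<rightarrow> mcarrier ?E" by (auto simp: E_simps M_zero_closed)
    fix x y :: "'o \<Rightarrow> nat \<times> nat \<Rightarrow> 'a"
    show "?f (x + y) = madd ?E (?f x) (?f y)" by (simp add: E_simps z sig_zero)
  next
    fix x :: "'o \<Rightarrow> nat \<times> nat \<Rightarrow> 'a" and r assume "r \<in> (KC k :: (nat \<times> nat \<Rightarrow> 'a) set)"
    then show "?f (act k x r) = mact ?E (?f x) r"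
      by (simp add: E_simps M_zero_act[OF hinj om lad] sig_zero)
  qed
  have inj_f: "inj_on ?f (mcarrier (dsum (KQ k) (UNIV :: 'o set)))" by (auto simp: inj_on_def)
  have hom_g: "rmod_hom (KQ k) ?E ?M snd"
    unfolding rmod_hom_def KQ_simps
  proof (intro conjI ballI)
    show "snd \<in> mcarrier ?E \<rightarrow> mcarrier ?M" by (auto simp: E_simps)
    fix x y assume "x \<in> mcarrier ?E" "y \<in> mcarrier ?E"
    then show "snd (madd ?E x y) = madd ?M (snd x) (snd y)" by (cases x; cases y) (simp add: E_simps)
  next
    fix x r assume "x \<in> mcarrier ?E" "r \<in> (KC k :: (nat \<times> nat \<Rightarrow> 'a) set)"
    then show "snd (mact ?E x r) = mact ?M (snd x) r" by (cases x) (simp add: E_simps)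
  qed
  have surj_g: "snd ` mcarrier ?E = mcarrier ?M"
  proof -
    have "DC k (UNIV :: 'o set) \<noteq> ({} :: ('o \<Rightarrow> nat \<times> nat \<Rightarrow> 'a) set)" using DC_zero by blast
    then show ?thesis unfolding E_simps by (simp add: snd_image_times)
  qed
  have ker: "?f ` mcarrier (dsum (KQ k) (UNIV :: 'o set)) = {e \<in> mcarrier ?E. snd e = mzero ?M}"
    by (auto simp: E_simps M_zero_closed)
  have nosplit: "\<not> (\<exists>s. rmod_hom (KQ k) ?M ?E s \<and> (\<forall>x\<in>mcarrier ?M. snd (s x) = x))"
    using no_section[OF hinj om lad] by blast
  show ?thesis unfolding Ext1_nonzero_def
    using E_module[OF hinj om lad] hom_f inj_f hom_g surj_g ker nosplit by blast
qed

end
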